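(* Let $d=2$, use polar coordinates $(r,\varphi)$ on $\mathbb{R}^2$, and let $V$ be a real-valued function on $B_1^c:=\{x\in\mathbb{R}^2:|x|>1\}$. For $u\in C_0^\infty(B_1^c)$ let $\psi(r,\varphi) := r^{-1/2}u(e^r,\varphi)$ for $r>0$. Then $$\int_{B_1^c}\overline{u}\,\big(-\Delta_{\mathbb{R}^2}u + Vu\big)\,dx = \int_0^\infty\!\!\int_0^{2\pi}\overline{\psi}\Big( -\frac1r\partial_r(r\partial_r\psi) - \partial_\varphi^2\psi + \frac{1}{4r^2}\psi + e^{2r}V(e^{r},\varphi)\psi \Big)\,r\,d\varphi\,dr,$$ i.e. $\langle u,(-\Delta+V)u\rangle_{L^2(B_1^c)} = \langle \psi, ( -\Delta_{\mathbb{R}^2} -(1 - r^{-2})\frac{d^2}{d\varphi^2} + \frac{1}{4r^2} + e^{2r}V(e^{r},\varphi) ) \psi \rangle_{L^2(\mathbb{R}^2)}$. Consequently, if $V(x) = -\frac{1}{4|x|^2(\ln |x|)^2} + W(x)$ with $W$ real-valued, then for all $u \in C_0^\infty(B_1^c)$ $$\Big\langle u, \Big( -\Delta_{\mathbb{R}^2} - \frac{1}{4r^2(\ln r)^2} + W \Big) u \Big\rangle_{L^2(B_1^c)} = \int_0^\infty\!\!\int_0^{2\pi}\overline{\psi}\Big( -\frac1r\partial_r(r\partial_r\psi) - \partial_\varphi^2\psi + e^{2r}W(e^{r},\varphi)\psi \Big)\,r\,d\varphi\,dr .$$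
   Context: $\langle f,g\rangle=\int\bar f g$. In the right-hand side, $-\Delta_{\mathbb{R}^2}-(1-r^{-2})\frac{d^2}{d\varphi^2}$ equals $-\frac1r\partial_r r\partial_r - \partial_\varphi^2$ in polar coordinates. *)

theory Defs
  imports "HOL-Analysis.Analysis"
begin

text \<open>The plane R^2 is modelled by the type complex (x + i y); lborel on complex is
  two-dimensional Lebesgue measure. Functions are complex-valued.\<close>

definition pdx :: "(complex \<Rightarrow> complex) \<Rightarrow> complex \<Rightarrow> complex" where
  "pdx f z = vector_derivative (\<lambda>t::real. f (z + of_real t)) (at 0)"

definition pdy :: "(complex \<Rightarrow> complex) \<Rightarrow> complex \<Rightarrow> complex" where
  "pdy f z = vector_derivative (\<lambda>t::real. f (z + \<i> * of_real t)) (at 0)"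

definition laplacian :: "(complex \<Rightarrow> complex) \<Rightarrow> complex \<Rightarrow> complex" where
  "laplacian f z = pdx (pdx f) z + pdy (pdy f) z"

text \<open>C^k regularity (real sense, as a map R^2 to C = R^2).\<close>
fun C_k :: "nat \<Rightarrow> (complex \<Rightarrow> complex) \<Rightarrow> bool" where
  "C_k 0 f = continuous_on UNIV f"
| "C_k (Suc k) f = ((\<forall>z. f differentiable (at z)) \<and> C_k k (pdx f) \<and> C_k k (pdy f))"

definition C_infty :: "(complex \<Rightarrow> complex) \<Rightarrow> bool" where
  "C_infty f \<longleftrightarrow> (\<forall>k. C_k k f)"

definition C0_infty_ext :: "(complex \<Rightarrow> complex) \<Rightarrow> bool" where
  "C0_infty_ext u \<longleftrightarrow> C_infty u \<and>
     (\<exists>K. compact K \<and> K \<subseteq> {z. cmod z > 1} \<and> (\<forall>z. z \<notin> K \<longrightarrow> u z = 0))"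

definition psi :: "(complex \<Rightarrow> complex) \<Rightarrow> real \<Rightarrow> real \<Rightarrow> complex" where
  "psi u r \<phi> = complex_of_real (r powr (-(1/2))) * u (rcis (exp r) \<phi>)"

definition pdr :: "(real \<Rightarrow> real \<Rightarrow> complex) \<Rightarrow> real \<Rightarrow> real \<Rightarrow> complex" where
  "pdr g r \<phi> = vector_derivative (\<lambda>s. g s \<phi>) (at r)"

definition pdphi :: "(real \<Rightarrow> real \<Rightarrow> complex) \<Rightarrow> real \<Rightarrow> real \<Rightarrow> complex" where
  "pdphi g r \<phi> = vector_derivative (\<lambda>s. g r s) (at \<phi>)"

end

theory Submission
  imports Defs
begin


definition TT :: "real \<Rightarrow> real \<Rightarrow> complex" where
  "TT s t = rcis (exp s) t"

lemma TT_eq: "TT s t = of_real (exp s) * (of_real (cos t) + \<i> * of_real (sin t))"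
  by (simp add: TT_def rcis_def cis.ctr Complex_eq)

lemma Re_TT[simp]: "Re (TT s t) = exp s * cos t" and Im_TT[simp]: "Im (TT s t) = exp s * sin t"
  by (simp_all add: TT_def)

lemma TT_ds: "((\<lambda>s. TT s t) has_vector_derivative TT s t) (at s within S)"
proof -
  have "((\<lambda>s. of_real (exp s) :: complex) has_vector_derivative of_real (exp s)) (at s within S)"
    by (intro has_vector_derivative_of_real) (auto intro!: derivative_eq_intros)
  from has_vector_derivative_mult_left[OF this, of "(of_real (cos t) + \<i> * of_real (sin t))"]
  show ?thesis by (simp add: TT_eq)
qed

lemma TT_dt: "((\<lambda>t. TT s t) has_vector_derivative \<i> * TT s t) (at t within S)"
proof -
  have c: "((\<lambda>t. of_real (cos t) :: complex) has_vector_derivative of_real (- sin t)) (at t within S)"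
    by (intro has_vector_derivative_of_real) (auto intro!: derivative_eq_intros)
  have s: "((\<lambda>t. of_real (sin t) :: complex) has_vector_derivative of_real (cos t)) (at t within S)"
    by (intro has_vector_derivative_of_real) (auto intro!: derivative_eq_intros)
  have "((\<lambda>t. of_real (exp s) * (of_real (cos t) + \<i> * of_real (sin t))) has_vector_derivative
        of_real (exp s) * (of_real (- sin t) + \<i> * of_real (cos t))) (at t within S)"
    by (intro has_vector_derivative_mult_right has_vector_derivative_add c
          has_vector_derivative_mult_right s)
  then show ?thesis unfolding TT_eq
    by (simp add: algebra_simps)
qed

lemma deriv_repr:
  fixes f :: "complex \<Rightarrow> complex"
  assumes "f differentiable (at z)"
  shows "(f has_derivative (\<lambda>h. of_real (Re h) * pdx f z + of_real (Im h) * pdy f z)) (at z)"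
proof -
  obtain D where D: "(f has_derivative D) (at z)" using assms by (auto simp: differentiable_def)
  then have lin: "linear D" using has_derivative_linear by blast
  have p1: "pdx f z = D 1"
  proof -
    have g0: "((\<lambda>t::real. of_real t :: complex) has_vector_derivative of_real 1) (at 0)"
      by (intro has_vector_derivative_of_real) (auto intro!: derivative_eq_intros)
    have g: "((\<lambda>t::real. z + of_real t) has_vector_derivative 1) (at 0)"
      using has_vector_derivative_add[OF has_vector_derivative_const g0, of z] by simp
    have "(f \<circ> (\<lambda>t::real. z + of_real t) has_vector_derivative D 1) (at 0)"
      by (rule vector_derivative_diff_chain_within[OF g]) (auto intro: has_derivative_at_withinI D)
    then show ?thesis unfolding pdx_def by (simp add: vector_derivative_at o_def)
  qed
  have p2: "pdy f z = D \<i>"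
  proof -
    have g0: "((\<lambda>t::real. of_real t :: complex) has_vector_derivative 1) (at 0)"
      using has_vector_derivative_of_real[of "\<lambda>x. x" 1 "at 0"] by simp
    have g: "((\<lambda>t::real. z + \<i> * of_real t) has_vector_derivative \<i>) (at 0)"
      using has_vector_derivative_add[OF has_vector_derivative_const has_vector_derivative_mult_right[OF g0, of \<i>], of z] by simp
    have "(f \<circ> (\<lambda>t::real. z + \<i> * of_real t) has_vector_derivative D \<i>) (at 0)"
      by (rule vector_derivative_diff_chain_within[OF g]) (auto intro: has_derivative_at_withinI D)
    then show ?thesis unfolding pdy_def by (simp add: vector_derivative_at o_def)
  qed
  have Dh: "D h = of_real (Re h) * D 1 + of_real (Im h) * D \<i>" for h
  proof -
    have "h = Re h *\<^sub>R 1 + Im h *\<^sub>R \<i>" by (metis complex_eq scaleR_conv_of_real mult.right_neutral mult.commute)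
    then have "D h = D (Re h *\<^sub>R 1 + Im h *\<^sub>R \<i>)" by simp
    also have "\<dots> = Re h *\<^sub>R D 1 + Im h *\<^sub>R D \<i>"
      using lin by (simp add: linear_add linear_scale)
    finally show ?thesis by (simp add: scaleR_conv_of_real)
  qed
  have "D = (\<lambda>h. of_real (Re h) * pdx f z + of_real (Im h) * pdy f z)"
    unfolding p1 p2 by (rule ext) (rule Dh)
  with D show ?thesis by simp
qed

lemma chain_pd:
  fixes f :: "complex \<Rightarrow> complex"
  assumes "\<And>z. f differentiable (at z)"
    and "(g has_vector_derivative g') (at t within S)"
  shows "((\<lambda>t. f (g t)) has_vector_derivative
           (of_real (Re g') * pdx f (g t) + of_real (Im g') * pdy f (g t))) (at t within S)"
  using vector_derivative_diff_chain_within[OF assms(2) has_derivative_at_withinI[OF deriv_repr[OF assms(1)]]]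
  by (simp add: o_def)


locale smooth2 =
  fixes u :: "complex \<Rightarrow> complex"
  assumes d0: "\<And>z. u differentiable (at z)"
    and d1: "\<And>z. pdx u differentiable (at z)"
    and d2: "\<And>z. pdy u differentiable (at z)"
begin

definition "Us s t = of_real (exp s * cos t) * pdx u (TT s t) + of_real (exp s * sin t) * pdy u (TT s t)"
definition "Ut s t = of_real (- (exp s * sin t)) * pdx u (TT s t) + of_real (exp s * cos t) * pdy u (TT s t)"
definition "Uss s t = of_real (exp s * cos t) * pdx u (TT s t)
   + of_real (exp s * cos t) * (of_real (exp s * cos t) * pdx (pdx u) (TT s t) + of_real (exp s * sin t) * pdy (pdx u) (TT s t))
   + of_real (exp s * sin t) * pdy u (TT s t)
   + of_real (exp s * sin t) * (of_real (exp s * cos t) * pdx (pdy u) (TT s t) + of_real (exp s * sin t) * pdy (pdy u) (TT s t))"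
definition "Utt s t = of_real (- (exp s * cos t)) * pdx u (TT s t)
   + of_real (- (exp s * sin t)) * (of_real (- (exp s * sin t)) * pdx (pdx u) (TT s t) + of_real (exp s * cos t) * pdy (pdx u) (TT s t))
   + of_real (- (exp s * sin t)) * pdy u (TT s t)
   + of_real (exp s * cos t) * (of_real (- (exp s * sin t)) * pdx (pdy u) (TT s t) + of_real (exp s * cos t) * pdy (pdy u) (TT s t))"

lemma du_s: "((\<lambda>s. u (TT s t)) has_vector_derivative Us s t) (at s within S)"
  using chain_pd[OF d0 TT_ds] by (simp add: Us_def)

lemma du_t: "((\<lambda>t. u (TT s t)) has_vector_derivative Ut s t) (at t within S)"
  using chain_pd[OF d0 TT_dt] by (simp add: Ut_def)

lemma ofr_s: "((\<lambda>s. of_real (exp s * c) :: complex) has_vector_derivative of_real (exp s * c)) (at s within S)"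
  by (intro has_vector_derivative_of_real) (auto intro!: derivative_eq_intros)

lemma ofr_c: "((\<lambda>t. of_real (e * cos t) :: complex) has_vector_derivative of_real (- (e * sin t))) (at t within S)"
  by (intro has_vector_derivative_of_real) (auto intro!: derivative_eq_intros)

lemma ofr_sn: "((\<lambda>t. of_real (- (e * sin t)) :: complex) has_vector_derivative of_real (- (e * cos t))) (at t within S)"
  by (intro has_vector_derivative_of_real) (auto intro!: derivative_eq_intros)

lemma ofr_sn': "((\<lambda>t. of_real (e * sin t) :: complex) has_vector_derivative of_real (e * cos t)) (at t within S)"
  by (intro has_vector_derivative_of_real) (auto intro!: derivative_eq_intros)

lemma dUs_s: "((\<lambda>s. Us s t) has_vector_derivative Uss s t) (at s within S)"
proof -
  have a: "((\<lambda>s. pdx u (TT s t)) has_vector_derivative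
      of_real (exp s * cos t) * pdx (pdx u) (TT s t) + of_real (exp s * sin t) * pdy (pdx u) (TT s t)) (at s within S)"
    using chain_pd[OF d1 TT_ds] by simp
  have b: "((\<lambda>s. pdy u (TT s t)) has_vector_derivative
      of_real (exp s * cos t) * pdx (pdy u) (TT s t) + of_real (exp s * sin t) * pdy (pdy u) (TT s t)) (at s within S)"
    using chain_pd[OF d2 TT_ds] by simp
  show ?thesis unfolding Us_def
    by (rule has_vector_derivative_eq_rhs, (rule has_vector_derivative_add has_vector_derivative_mult ofr_s a b)+)
       (simp add: Uss_def algebra_simps)
qed

lemma dUt_t: "((\<lambda>t. Ut s t) has_vector_derivative Utt s t) (at t within S)"
proof -
  have a: "((\<lambda>t. pdx u (TT s t)) has_vector_derivative
      of_real (- (exp s * sin t)) * pdx (pdx u) (TT s t) + of_real (exp s * cos t) * pdy (pdx u) (TT s t)) (at t within S)"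
    using chain_pd[OF d1 TT_dt] by simp
  have b: "((\<lambda>t. pdy u (TT s t)) has_vector_derivative
      of_real (- (exp s * sin t)) * pdx (pdy u) (TT s t) + of_real (exp s * cos t) * pdy (pdy u) (TT s t)) (at t within S)"
    using chain_pd[OF d2 TT_dt] by simp
  show ?thesis unfolding Ut_def
    by (rule has_vector_derivative_eq_rhs, (rule has_vector_derivative_add has_vector_derivative_mult ofr_c ofr_sn a b)+)
       (simp add: Utt_def algebra_simps)
qed

lemma lap_sum: "Uss s t + Utt s t = of_real (exp (2 * s)) * laplacian u (TT s t)"
proof -
  have e: "exp (2 * s) = exp s * exp s" by (metis exp_add mult_2)
  have cs: "(of_real (cos t))\<^sup>2 + (of_real (sin t))\<^sup>2 = (1::complex)"
    by (simp only: of_real_power[symmetric] of_real_add[symmetric] sin_cos_squared_add of_real_1) simp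
  have "Uss s t + Utt s t = of_real (exp s) * of_real (exp s) * (pdx (pdx u) (TT s t) + pdy (pdy u) (TT s t)) * ((of_real (cos t))\<^sup>2 + (of_real (sin t))\<^sup>2)"
    unfolding Uss_def Utt_def by (simp add: algebra_simps power2_eq_square)
  also have "\<dots> = of_real (exp (2 * s)) * laplacian u (TT s t)"
    by (simp only: cs e laplacian_def mult_1_right of_real_mult)
  finally show ?thesis .
qed

end


context smooth2 begin

lemma psi_TT: "psi u s t = of_real (s powr - (1/2)) * u (TT s t)"
  by (simp add: psi_def TT_def)

lemma rpow_half: "0 < s \<Longrightarrow> s powr - (1/2) = 1 / sqrt s"
  by (simp add: powr_minus_divide powr_half_sqrt)

lemma psi_pos: "0 < s \<Longrightarrow> psi u s t = of_real (1 / sqrt s) * u (TT s t)"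
  by (simp add: psi_TT rpow_half)

lemma d_invsqrt: "0 < s \<Longrightarrow> ((\<lambda>x. 1 / sqrt x) has_real_derivative - 1 / (2 * s * sqrt s)) (at s)"
  by (auto intro!: derivative_eq_intros simp: field_simps)

lemma d_sqrt: "0 < s \<Longrightarrow> ((\<lambda>x. sqrt x) has_real_derivative 1 / (2 * sqrt s)) (at s)"
  by (auto intro!: derivative_eq_intros simp: field_simps)

lemma d_minvsqrt: "0 < s \<Longrightarrow> ((\<lambda>x. - 1 / (2 * sqrt x)) has_real_derivative 1 / (4 * s * sqrt s)) (at s)"
  by (auto intro!: derivative_eq_intros simp: field_simps)

definition "Pr s t = of_real (- 1 / (2 * s * sqrt s)) * u (TT s t) + of_real (1 / sqrt s) * Us s t"

lemma pdr_psi: assumes "0 < s" shows "pdr (psi u) s t = Pr s t"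
proof -
  have "((\<lambda>x. of_real (1 / sqrt x) * u (TT x t)) has_vector_derivative
      of_real (1 / sqrt s) * Us s t + of_real (- 1 / (2 * s * sqrt s)) * u (TT s t)) (at s)"
    by (rule has_vector_derivative_mult has_vector_derivative_of_real d_invsqrt assms du_s)+
  then have "((\<lambda>x. of_real (1 / sqrt x) * u (TT x t)) has_vector_derivative Pr s t) (at s)"
    by (simp add: Pr_def algebra_simps)
  then have "((\<lambda>x. psi u x t) has_vector_derivative Pr s t) (at s)"
    by (rule has_vector_derivative_transform_within_open[where S="{0<..}"])
       (use assms in \<open>auto simp: psi_pos Pr_def\<close>)
  then show ?thesis unfolding pdr_def by (rule vector_derivative_at)
qed

definition "Er s t = of_real (1 / (4 * s * sqrt s)) * u (TT s t) + of_real (sqrt s) * Uss s t"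

lemma pdr_E: assumes "0 < s"
  shows "pdr (\<lambda>s t. of_real s * pdr (psi u) s t) s t = Er s t"
proof -
  have "((\<lambda>x. of_real (- 1 / (2 * sqrt x)) * u (TT x t) + of_real (sqrt x) * Us x t) has_vector_derivative
      (of_real (- 1 / (2 * sqrt s)) * Us s t + of_real (1 / (4 * s * sqrt s)) * u (TT s t))
      + (of_real (sqrt s) * Uss s t + of_real (1 / (2 * sqrt s)) * Us s t)) (at s)"
    by (rule has_vector_derivative_add has_vector_derivative_mult has_vector_derivative_of_real
          d_minvsqrt d_sqrt assms du_s dUs_s)+
  then have "((\<lambda>x. of_real (- 1 / (2 * sqrt x)) * u (TT x t) + of_real (sqrt x) * Us x t) has_vector_derivative
      Er s t) (at s)"
    by (simp add: Er_def algebra_simps)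
  then have "((\<lambda>x. of_real x * pdr (psi u) x t) has_vector_derivative Er s t) (at s)"
  proof (rule has_vector_derivative_transform_within_open[where S="{0<..}"])
    fix y :: real assume y: "y \<in> {0<..}"
    then have y0: "0 < y" by simp
    have "sqrt y * sqrt y = y" using y0 by simp
    then have "complex_of_real (sqrt y) * complex_of_real (sqrt y) = complex_of_real y"
      by (metis of_real_mult)
    then show "of_real (- 1 / (2 * sqrt y)) * u (TT y t) + of_real (sqrt y) * Us y t = of_real y * pdr (psi u) y t"
      using y0 by (simp add: pdr_psi Pr_def field_simps)
  qed (use assms in auto)
  then show ?thesis unfolding pdr_def by (rule vector_derivative_at)
qed

lemma pdphi_psi: "pdphi (psi u) s t = of_real (s powr - (1/2)) * Ut s t"
  unfolding pdphi_def psi_TT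
  by (rule vector_derivative_at, rule has_vector_derivative_mult_right, rule du_t)

lemma pdphi2_psi: "pdphi (pdphi (psi u)) s t = of_real (s powr - (1/2)) * Utt s t"
  unfolding pdphi_def[of "pdphi (psi u)"] pdphi_psi
  by (rule vector_derivative_at, rule has_vector_derivative_mult_right, rule dUt_t)

end


lemma alg_id:
  fixes q e a ca A B v R :: complex
  assumes "q \<noteq> 0" "e \<noteq> 0" "R = q * q"
  shows "(1/q * ca) * ( - (1 / R) * (1/(4*R*q) * a + q * A) - 1/q * B
           + 1/(4 * R\<^sup>2) * (1/q * a) + e * v * (1/q * a)) * R
       = e * (ca * (- ((A+B)/e) + v * a))"
  using assms by (simp add: field_simps power2_eq_square)

context smooth2 begin

lemma pointwise:
  fixes V :: "complex \<Rightarrow> real"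
  assumes r: "0 < r"
  shows "cnj (psi u r \<phi>) *
                ( - (1 / of_real r) * pdr (\<lambda>s t. of_real s * pdr (psi u) s t) r \<phi>
                  - pdphi (pdphi (psi u)) r \<phi>
                  + of_real (1 / (4 * r\<^sup>2)) * psi u r \<phi>
                  + of_real (exp (2 * r) * V (rcis (exp r) \<phi>)) * psi u r \<phi>) * of_real r
     = of_real (exp (2 * r)) * (cnj (u (TT r \<phi>)) * (- laplacian u (TT r \<phi>) + of_real (V (TT r \<phi>)) * u (TT r \<phi>)))"
proof -
  define q where "q = (of_real (sqrt r) :: complex)"
  have q0: "q \<noteq> 0" using r by (simp add: q_def)
  have e0: "(of_real (exp (2 * r)) :: complex) \<noteq> 0" by simp
  have R: "(of_real r :: complex) = q * q" using r unfolding q_def by (metis of_real_mult real_sqrt_mult_self less_imp_le real_sqrt_abs2 abs_of_pos)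
  have lap: "laplacian u (TT r \<phi>) = (Uss r \<phi> + Utt r \<phi>) / of_real (exp (2 * r))"
    using lap_sum[of r \<phi>] e0 by (simp add: field_simps)
  have c1: "cnj (1/q * u (TT r \<phi>)) = 1/q * cnj (u (TT r \<phi>))"
    by (simp add: q_def)
  have p1: "psi u r \<phi> = 1/q * u (TT r \<phi>)"
    using r by (simp add: psi_pos q_def)
  have p2: "pdphi (pdphi (psi u)) r \<phi> = 1/q * Utt r \<phi>"
    using r by (simp add: pdphi2_psi rpow_half q_def)
  have p3: "pdr (\<lambda>s t. of_real s * pdr (psi u) s t) r \<phi> = 1/(4*(of_real r)*q) * u (TT r \<phi>) + q * Uss r \<phi>"
    using r by (simp add: pdr_E Er_def q_def)
  have p4: "(of_real (1 / (4 * r\<^sup>2)) :: complex) = 1/(4 * (of_real r)\<^sup>2)" by simp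
  have p5: "(of_real (exp (2 * r) * V (rcis (exp r) \<phi>)) :: complex) = of_real (exp (2 * r)) * of_real (V (TT r \<phi>))"
    by (simp add: TT_def)
  show ?thesis
    unfolding p1 p2 p3 p4 p5 lap c1
    by (rule alg_id[OF q0 e0 R])
qed

end


definition c2 :: "complex \<Rightarrow> real^2" where "c2 z = vector [Re z, Im z]"
definition ci :: "real^2 \<Rightarrow> complex" where "ci y = Complex (y$1) (y$2)"
definition ep :: "real \<times> real \<Rightarrow> real^2" where "ep p = vector [fst p, snd p]"
definition ei :: "real^2 \<Rightarrow> real \<times> real" where "ei y = (y$1, y$2)"

lemma c2_ci[simp]: "c2 (ci y) = y"
  by (simp add: c2_def ci_def vec_eq_iff forall_2)
lemma ci_c2[simp]: "ci (c2 z) = z"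
  by (simp add: c2_def ci_def)
lemma ep_ei[simp]: "ep (ei y) = y"
  by (simp add: ep_def ei_def vec_eq_iff forall_2)
lemma ei_ep[simp]: "ei (ep p) = p"
  by (simp add: ep_def ei_def)

lemma linear_ci: "bounded_linear ci"
proof -
  have "linear ci" by (rule linearI) (simp_all add: ci_def complex_eq_iff)
  then show ?thesis by (simp add: linear_conv_bounded_linear)
qed
lemma linear_c2: "bounded_linear c2"
proof -
  have "linear c2" by (rule linearI) (simp_all add: c2_def vec_eq_iff forall_2)
  then show ?thesis by (simp add: linear_conv_bounded_linear)
qed
lemma linear_ei: "bounded_linear ei"
proof -
  have "linear ei" by (rule linearI) (simp_all add: ei_def)
  then show ?thesis by (simp add: linear_conv_bounded_linear)
qed

lemma meas_ci[measurable]: "ci \<in> borel_measurable borel"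
  by (intro borel_measurable_continuous_onI linear_continuous_on linear_ci)
lemma meas_ei[measurable]: "ei \<in> borel_measurable borel"
  by (intro borel_measurable_continuous_onI linear_continuous_on linear_ei)

lemma box_2: "box (a::real^2) b = {y. a$1 < y$1 \<and> y$1 < b$1 \<and> a$2 < y$2 \<and> y$2 < b$2}"
  by (auto simp: mem_box_cart forall_2)

lemma emeasure_box_2:
  assumes "a$1 \<le> b$1" "a$2 \<le> b$2"
  shows "emeasure lborel (box (a::real^2) b) = ennreal ((b$1 - a$1) * (b$2 - a$2))"
proof -
  have "emeasure lborel (box a b) = emeasure lborel (cbox a b)"
    by (simp add: emeasure_lborel_box_eq emeasure_lborel_cbox_eq)
  also have "\<dots> = ennreal (measure lborel (cbox a b))"
    using emeasure_lborel_cbox_finite[of a b] by (simp add: emeasure_eq_ennreal_measure)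
  also have "measure lborel (cbox a b) = (b$1 - a$1) * (b$2 - a$2)"
  proof -
    have "a \<in> cbox a b" using assms by (auto simp: mem_box_cart forall_2)
    then have "cbox a b \<noteq> {}" by auto
    then show ?thesis by (simp add: content_cbox_cart UNIV_2)
  qed
  finally show ?thesis .
qed

lemma distr_ci: "distr lborel borel ci = lborel"
proof (rule lborel_eqI[symmetric])
  fix l u :: complex
  assume le: "\<And>b. b \<in> Basis \<Longrightarrow> l \<bullet> b \<le> u \<bullet> b"
  then have le1: "Re l \<le> Re u" and le2: "Im l \<le> Im u"
    using le[of 1] le[of \<i>] by (auto simp: Basis_complex_def)
  have "ci -` box l u = box (c2 l) (c2 u)"
    by (auto simp: box_2 ci_def c2_def mem_box Basis_complex_def)
  then show "emeasure (distr lborel borel ci) (box l u) = (\<Prod>b\<in>Basis. (u - l) \<bullet> b)"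
    using le1 le2
    by (simp add: emeasure_distr emeasure_box_2 c2_def Basis_complex_def)
qed simp

lemma distr_ei: "distr lborel borel ei = lborel"
proof (rule lborel_eqI[symmetric])
  fix l u :: "real \<times> real"
  assume le: "\<And>b. b \<in> Basis \<Longrightarrow> l \<bullet> b \<le> u \<bullet> b"
  have le1: "fst l \<le> fst u"
    using le[of "(1,0)"] by (auto simp: Basis_prod_def inner_prod_def)
  have le2: "snd l \<le> snd u"
    using le[of "(0,1)"] by (auto simp: Basis_prod_def inner_prod_def)
  have "ei -` box l u = box (ep l) (ep u)"
    by (auto simp: box_2 ei_def ep_def mem_box Basis_prod_def inner_prod_def)
  moreover have "(\<Prod>b\<in>Basis. (u - l) \<bullet> b) = (fst u - fst l) * (snd u - snd l)"
    by (simp add: Basis_prod_def prod.union_disjoint inner_prod_def)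
  ultimately show "emeasure (distr lborel borel ei) (box l u) = (\<Prod>b\<in>Basis. (u - l) \<bullet> b)"
    using le1 le2
    by (simp add: emeasure_distr emeasure_box_2 ep_def)
qed simp


definition gg :: "real^2 \<Rightarrow> real^2" where "gg y = c2 (exp (ci y))"
definition SS :: "(real^2) set" where "SS = {y. 0 < y$1 \<and> 0 \<le> y$2 \<and> y$2 < 2*pi}"

lemma TT_exp: "TT s t = exp (Complex s t)"
  by (simp add: TT_def rcis_def exp_eq_polar)

lemma Re_ci[simp]: "Re (ci y) = y$1" and Im_ci[simp]: "Im (ci y) = y$2"
  by (simp_all add: ci_def)

lemma ci_axis1: "ci (axis 1 1) = 1" and ci_axis2: "ci (axis 2 1) = \<i>"
  by (simp_all add: ci_def axis_def complex_eq_iff)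

lemma gg_deriv: "(gg has_derivative (\<lambda>h. c2 (ci h * exp (ci y)))) (at y within S)"
proof -
  have d1: "(ci has_derivative ci) (at y within S)"
    by (rule bounded_linear_imp_has_derivative[OF linear_ci])
  have d2: "(exp has_derivative (\<lambda>h. exp (ci y) * h)) (at (ci y) within ci ` S)"
    using DERIV_exp[of "ci y"] unfolding has_field_derivative_def
    by (rule has_derivative_at_withinI)
  have d3: "(c2 has_derivative c2) (at (exp (ci y)) within exp ` ci ` S)"
    by (rule bounded_linear_imp_has_derivative[OF linear_c2])
  have "(c2 \<circ> (exp \<circ> ci) has_derivative c2 \<circ> ((\<lambda>h. exp (ci y) * h) \<circ> ci)) (at y within S)"
    by (rule diff_chain_within[OF diff_chain_within[OF d1 d2]]) (rule bounded_linear_imp_has_derivative[OF linear_c2])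
  then show ?thesis by (simp add: gg_def[abs_def] o_def mult.commute)
qed

lemma gg_det: "\<bar>det (matrix (\<lambda>h. c2 (ci h * exp (ci y))))\<bar> = exp (2 * (y$1))"
proof -
  have n: "(Re (exp (ci y)))\<^sup>2 + (Im (exp (ci y)))\<^sup>2 = (exp (y$1))\<^sup>2"
  proof -
    have "(Re (exp (ci y)))\<^sup>2 + (Im (exp (ci y)))\<^sup>2 = (cmod (exp (ci y)))\<^sup>2"
      by (rule cmod_power2[symmetric])
    also have "\<dots> = (exp (y$1))\<^sup>2" by (simp add: ci_def)
    finally show ?thesis .
  qed
  have "det (matrix (\<lambda>h. c2 (ci h * exp (ci y)))) = (Re (exp (ci y)))\<^sup>2 + (Im (exp (ci y)))\<^sup>2"
    by (simp add: det_2 matrix_def ci_axis1 ci_axis2 c2_def power2_eq_square axis_def)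
  also have "\<dots> = exp (2 * (y$1))" using n by (simp add: power2_eq_square flip: exp_add mult_2)
  finally show ?thesis by simp
qed

lemma c2_inj: "c2 a = c2 b \<Longrightarrow> a = b"
  by (metis ci_c2)

lemma gg_inj: "inj_on gg SS"
proof (rule inj_onI)
  fix x y assume x: "x \<in> SS" and y: "y \<in> SS" and e: "gg x = gg y"
  then have e2: "exp (ci x) = exp (ci y)" by (auto simp: gg_def dest: c2_inj)
  have "exp (x$1) = exp (y$1)" using arg_cong[OF e2, of cmod] by (simp add: norm_exp_eq_Re)
  then have 1: "x$1 = y$1" by simp
  have "Arg2pi (exp (ci x)) = x$2" using x by (subst Arg2pi_exp) (auto simp: SS_def)
  moreover have "Arg2pi (exp (ci y)) = y$2" using y by (subst Arg2pi_exp) (auto simp: SS_def)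
  ultimately have 2: "x$2 = y$2" using e2 by simp
  show "x = y" using 1 2 by (simp add: vec_eq_iff forall_2)
qed

lemma gg_image: "gg ` SS = c2 ` {x. 1 < cmod x}"
proof
  show "gg ` SS \<subseteq> c2 ` {x. 1 < cmod x}"
    by (auto simp: gg_def SS_def norm_exp_eq_Re)
  show "c2 ` {x. 1 < cmod x} \<subseteq> gg ` SS"
  proof
    fix w assume "w \<in> c2 ` {x. 1 < cmod x}"
    then obtain x where x: "1 < cmod x" and w: "w = c2 x" by auto
    define y where "y = c2 (Complex (ln (cmod x)) (Arg2pi x))"
    have "exp (ci y) = of_real (exp (ln (cmod x))) * cis (Arg2pi x)"
      by (simp only: y_def ci_c2 exp_eq_polar complex.sel)
    also have "\<dots> = of_real (cmod x) * exp (\<i> * of_real (Arg2pi x))"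
      using x by (auto simp: cis_conv_exp mult.commute)
    also have "\<dots> = x" using Arg2pi[of x] by (simp add: is_Arg_def)
    finally have "gg y = w" by (simp add: gg_def w)
    moreover have "y \<in> SS" using x Arg2pi[of x] ln_gt_zero[of "cmod x"] by (simp add: y_def SS_def c2_def)
    ultimately show "w \<in> gg ` SS" by blast
  qed
qed

lemma nth_borel[measurable]: "(\<lambda>y::real^2. y$i) \<in> borel_measurable borel"
  by (intro borel_measurable_continuous_onI continuous_intros)

lemma SS_sets: "SS \<in> sets lebesgue"
proof -
  have "SS \<in> sets borel" unfolding SS_def by measurable
  then show ?thesis by simp
qed

lemma ai_c2:
  fixes G :: "real^2 \<Rightarrow> complex"
  shows "(\<lambda>y. c2 (G y)) absolutely_integrable_on A \<longleftrightarrow> G absolutely_integrable_on A"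
proof
  assume "(\<lambda>y. c2 (G y)) absolutely_integrable_on A"
  from absolutely_integrable_linear[OF this linear_ci] show "G absolutely_integrable_on A"
    by (simp add: o_def)
next
  assume "G absolutely_integrable_on A"
  from absolutely_integrable_linear[OF this linear_c2] show "(\<lambda>y. c2 (G y)) absolutely_integrable_on A"
    by (simp add: o_def)
qed

lemma int_c2:
  fixes G :: "real^2 \<Rightarrow> complex"
  assumes "G absolutely_integrable_on A"
  shows "integral A (\<lambda>y. c2 (G y)) = c2 (integral A G)"
  using integral_linear[OF set_lebesgue_integral_eq_integral(1)[OF assms] linear_c2]
  by (simp add: o_def)

lemma c2_scale: "c2 (of_real r * z) = r *\<^sub>R c2 z"
  by (simp add: c2_def vec_eq_iff forall_2)

lemma cov:
  fixes F :: "complex \<Rightarrow> complex"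
  shows "(\<lambda>y. of_real (exp (2*(y$1))) * F (exp (ci y))) absolutely_integrable_on SS
           \<longleftrightarrow> (\<lambda>y. F (ci y)) absolutely_integrable_on (c2 ` {x. 1 < cmod x})" (is "?A \<longleftrightarrow> ?B")
    and "(\<lambda>y. F (ci y)) absolutely_integrable_on (c2 ` {x. 1 < cmod x}) \<Longrightarrow>
         integral SS (\<lambda>y. of_real (exp (2*(y$1))) * F (exp (ci y))) = integral (c2 ` {x. 1 < cmod x}) (\<lambda>y. F (ci y))"
proof -
  note th = has_absolute_integral_change_of_variables[OF SS_sets gg_deriv gg_inj,
      of "\<lambda>y. c2 (F (ci y))", unfolded gg_image gg_det]
  have eq: "(\<lambda>x. exp (2 * x $ 1) *\<^sub>R c2 (F (ci (gg x)))) = (\<lambda>x. c2 (of_real (exp (2*(x$1))) * F (exp (ci x))))"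
    by (simp add: gg_def c2_scale)
  note th = th[unfolded eq]
  show "?A \<longleftrightarrow> ?B"
    using th[of "integral (c2 ` {x. 1 < cmod x}) (\<lambda>y. c2 (F (ci y)))"]
      th[of "integral SS (\<lambda>x. c2 (of_real (exp (2*(x$1))) * F (exp (ci x))))"]
    by (auto simp: ai_c2)
  assume B: ?B
  then have A: ?A using \<open>?A \<longleftrightarrow> ?B\<close> by simp
  have "c2 (integral SS (\<lambda>y. of_real (exp (2*(y$1))) * F (exp (ci y)))) = c2 (integral (c2 ` {x. 1 < cmod x}) (\<lambda>y. F (ci y)))"
    using th[of "integral (c2 ` {x. 1 < cmod x}) (\<lambda>y. c2 (F (ci y)))"] A B
    by (auto simp: ai_c2 int_c2)
  then show "integral SS (\<lambda>y. of_real (exp (2*(y$1))) * F (exp (ci y))) = integral (c2 ` {x. 1 < cmod x}) (\<lambda>y. F (ci y))"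
    by (rule c2_inj)
qed


lemma transfer:
  fixes h :: "'a::euclidean_space \<Rightarrow> 'b::euclidean_space" and F :: "'b \<Rightarrow> complex"
  assumes hd: "distr lborel borel h = lborel" and hm: "h \<in> borel_measurable borel"
    and Fm: "(\<lambda>x. indicator A x *\<^sub>R F x) \<in> borel_measurable borel"
  shows "set_integrable lborel A F \<longleftrightarrow> set_integrable lborel (h -` A) (\<lambda>y. F (h y))"
    and "(LINT x:A|lborel. F x) = (LINT y:(h -` A)|lborel. F (h y))"
proof -
  have m: "h \<in> lborel \<rightarrow>\<^sub>M borel" using hm by (simp add: measurable_lborel2)
  have "set_integrable lborel A F = integrable (distr lborel borel h) (\<lambda>x. indicator A x *\<^sub>R F x)"
    unfolding set_integrable_def by (simp only: hd)
  also have "\<dots> = integrable lborel (\<lambda>y. indicator A (h y) *\<^sub>R F (h y))"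
    by (rule integrable_distr_eq[OF m Fm])
  finally show "set_integrable lborel A F \<longleftrightarrow> set_integrable lborel (h -` A) (\<lambda>y. F (h y))"
    unfolding set_integrable_def by (simp add: indicator_vimage[symmetric])
  have "(LINT x:A|lborel. F x) = integral\<^sup>L (distr lborel borel h) (\<lambda>x. indicator A x *\<^sub>R F x)"
    unfolding set_lebesgue_integral_def by (simp only: hd)
  also have "\<dots> = integral\<^sup>L lborel (\<lambda>y. indicator A (h y) *\<^sub>R F (h y))"
    by (rule integral_distr[OF m Fm])
  finally show "(LINT x:A|lborel. F x) = (LINT y:(h -` A)|lborel. F (h y))"
    unfolding set_lebesgue_integral_def by (simp add: indicator_vimage[symmetric])
qed

lemma henst:
  fixes f :: "'a::euclidean_space \<Rightarrow> 'c::euclidean_space"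
  assumes m: "(\<lambda>x. indicator S x *\<^sub>R f x) \<in> borel_measurable borel"
  shows "set_integrable lborel S f \<longleftrightarrow> f absolutely_integrable_on S"
proof -
  have "(\<lambda>x. indicator S x *\<^sub>R f x) \<in> borel_measurable lborel" using m by (simp add: measurable_lborel2)
  then show ?thesis
    unfolding absolutely_integrable_on_def set_integrable_def
    by (simp add: integrable_completion)
qed

lemma TT_cont: "continuous_on UNIV (\<lambda>p::real\<times>real. TT (fst p) (snd p))"
  unfolding TT_eq by (intro continuous_intros)

lemma TT_meas[measurable]: "(\<lambda>p::real\<times>real. TT (fst p) (snd p)) \<in> borel_measurable borel"
  by (rule borel_measurable_continuous_onI[OF TT_cont])

lemma Arg2pi_meas[measurable]: "Arg2pi \<in> borel_measurable borel"
  by (rule borel_measurableI_le) (simp add: closed_Arg2pi2pi_le)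

lemma norm_TT[simp]: "cmod (TT s t) = exp s"
  by (simp add: TT_def)

lemma null_edge: "AE p in (lborel :: (real \<times> real) measure). (p \<in> {0<..} \<times> {0..2*pi}) = (p \<in> {0<..} \<times> {0..<2*pi})"
proof (rule AE_I')
  have "emeasure (lborel \<Otimes>\<^sub>M lborel) (UNIV \<times> {2*pi}) = (0::ennreal)"
    by (simp add: lborel.emeasure_pair_measure_Times)
  then show "UNIV \<times> {2*pi} \<in> null_sets (lborel :: (real \<times> real) measure)"
    by (simp add: lborel_prod null_sets_def borel_closed closed_Times)
qed auto


lemma ci_vimage: "ci -` {x. 1 < cmod x} = c2 ` {x. 1 < cmod x}"
  by (auto simp: image_iff intro: exI[of _ "ci _"]) (metis c2_ci)

lemma ei_vimage: "ei -` ({0<..} \<times> {0..<2*pi}) = SS"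
  by (auto simp: ei_def SS_def)

lemma TT_ci: "TT (fst (ei y)) (snd (ei y)) = exp (ci y)"
  by (simp add: TT_exp ei_def ci_def)

lemma polar_int:
  fixes G :: "complex \<Rightarrow> complex"
  shows "(LINT x:{x. 1 < cmod x}|lborel. G x)
       = (LINT p:{0<..} \<times> {0..2*pi}|lborel. of_real (exp (2 * fst p)) * G (TT (fst p) (snd p)))"
proof -
  define \<Omega> where "\<Omega> = {x::complex. 1 < cmod x}"
  define D where "D = ({0<..} \<times> {0..2*pi} :: (real \<times> real) set)"
  define D' where "D' = ({0<..} \<times> {0..<2*pi} :: (real \<times> real) set)"
  define H where "H p = of_real (exp (2 * fst p)) * G (TT (fst p) (snd p))" for p :: "real \<times> real"
  have D'D: "D' \<subseteq> D" by (auto simp: D_def D'_def)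
  have TTO: "TT (fst p) (snd p) \<in> \<Omega>" if "p \<in> D" for p
    using that by (auto simp: D_def \<Omega>_def)
  have "D \<in> sets (borel \<Otimes>\<^sub>M borel)" unfolding D_def by (rule pair_measureI) auto
  then have Dm[measurable]: "D \<in> sets borel" by (metis borel_prod)
  have "D' \<in> sets (borel \<Otimes>\<^sub>M borel)" unfolding D'_def by (rule pair_measureI) auto
  then have D'm[measurable]: "D' \<in> sets borel" by (metis borel_prod)
  have Om[measurable]: "\<Omega> \<in> sets borel" unfolding \<Omega>_def by measurable
  show ?thesis
  proof (cases "(\<lambda>x. indicator \<Omega> x *\<^sub>R G x) \<in> borel_measurable borel")
    case True
    note GOm[measurable] = True
    have HD_eq: "(\<lambda>p. indicator D p *\<^sub>R H p) = (\<lambda>p. indicator D p *\<^sub>R (of_real (exp (2 * fst p)) *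
                (indicator \<Omega> (TT (fst p) (snd p)) *\<^sub>R G (TT (fst p) (snd p)))))"
      by (rule ext) (auto simp: H_def TTO indicator_def)
    have comp: "(\<lambda>p. indicator \<Omega> (TT (fst p) (snd p)) *\<^sub>R G (TT (fst p) (snd p))) \<in> borel_measurable borel"
      using measurable_compose[OF TT_meas GOm] by simp
    have expm: "(\<lambda>p::real\<times>real. of_real (exp (2 * fst p)) :: complex) \<in> borel_measurable borel"
      by (intro borel_measurable_continuous_onI continuous_intros)
    have HDm[measurable]: "(\<lambda>p. indicator D p *\<^sub>R H p) \<in> borel_measurable borel"
      unfolding HD_eq by (intro borel_measurable_scaleR borel_measurable_times borel_measurable_indicator Dm expm comp)
    have HD'_eq: "(\<lambda>p. indicator D' p *\<^sub>R H p) = (\<lambda>p. indicator D' p *\<^sub>R (indicator D p *\<^sub>R H p))"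
      using D'D by (auto simp: indicator_def fun_eq_iff)
    have HD'm[measurable]: "(\<lambda>p. indicator D' p *\<^sub>R H p) \<in> borel_measurable borel"
      unfolding HD'_eq by (intro borel_measurable_scaleR borel_measurable_indicator D'm HDm)
    have ae: "AE p in lborel. (p \<in> D) = (p \<in> D')"
      using null_edge by (simp add: D_def D'_def)
    have b1: "set_borel_measurable lborel D H" unfolding set_borel_measurable_def measurable_lborel2 by (rule HDm)
    have b2: "set_borel_measurable lborel D' H" unfolding set_borel_measurable_def measurable_lborel2 by (rule HD'm)
    have i1: "(LINT p:D|lborel. H p) = (LINT p:D'|lborel. H p)"
      by (rule set_integral_cong_set[OF b2 b1]) (use ae in auto)
    have s1: "set_integrable lborel D H \<longleftrightarrow> set_integrable lborel D' H"
      unfolding set_integrable_def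
      by (rule integrable_cong_AE[OF b1[unfolded set_borel_measurable_def] b2[unfolded set_borel_measurable_def]])
         (use ae in \<open>auto simp: indicator_def\<close>)
    note tE = transfer[OF distr_ei meas_ei HD'm]
    note tC = transfer[OF distr_ci meas_ci GOm]
    have HeiSS: "(\<lambda>y. H (ei y)) = (\<lambda>y. of_real (exp (2*(y$1))) * G (exp (ci y)))"
      by (rule ext) (simp add: H_def TT_ci, simp add: ei_def)
    have mSS: "(\<lambda>y. indicator SS y *\<^sub>R (of_real (exp (2*(y$1))) * G (exp (ci y)))) \<in> borel_measurable borel"
    proof -
      have "(\<lambda>y. indicator SS y *\<^sub>R (of_real (exp (2*(y$1))) * G (exp (ci y)))) = (\<lambda>y. indicator D' (ei y) *\<^sub>R H (ei y))"
        using HeiSS by (auto simp: ei_vimage[symmetric, unfolded D'_def[symmetric]] indicator_def fun_eq_iff)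
      then show ?thesis by simp
    qed
    have mC: "(\<lambda>y. indicator (c2 ` \<Omega>) y *\<^sub>R G (ci y)) \<in> borel_measurable borel"
    proof -
      have "(\<lambda>y. indicator (c2 ` \<Omega>) y *\<^sub>R G (ci y)) = (\<lambda>y. indicator \<Omega> (ci y) *\<^sub>R G (ci y))"
        by (auto simp: ci_vimage[symmetric, unfolded \<Omega>_def[symmetric]] indicator_def fun_eq_iff)
      then show ?thesis by simp
    qed
    have intiff: "set_integrable lborel \<Omega> G \<longleftrightarrow> set_integrable lborel D H"
      unfolding s1 tE(1) tC(1) ci_vimage[unfolded \<Omega>_def[symmetric]] ei_vimage[unfolded D'_def[symmetric]] HeiSS
        henst[OF mSS] henst[OF mC] cov(1)[of G, unfolded \<Omega>_def[symmetric]] ..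
    show ?thesis
    proof (cases "set_integrable lborel \<Omega> G")
      case True
      then have B: "(\<lambda>y. G (ci y)) absolutely_integrable_on c2 ` \<Omega>"
        unfolding tC(1) ci_vimage[unfolded \<Omega>_def[symmetric]] henst[OF mC] .
      have A: "set_integrable lborel SS (\<lambda>y. of_real (exp (2*(y$1))) * G (exp (ci y)))"
        using B unfolding henst[OF mSS] cov(1)[of G, unfolded \<Omega>_def[symmetric]] .
      have "(LINT x:\<Omega>|lborel. G x) = integral (c2 ` \<Omega>) (\<lambda>y. G (ci y))"
        unfolding tC(2) ci_vimage[unfolded \<Omega>_def[symmetric]]
        by (rule set_borel_integral_eq_integral(2)) (use True in \<open>simp add: tC(1) ci_vimage[unfolded \<Omega>_def[symmetric]]\<close>)
      also have "\<dots> = integral SS (\<lambda>y. of_real (exp (2*(y$1))) * G (exp (ci y)))"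
        using cov(2)[of G, unfolded \<Omega>_def[symmetric], OF B] by simp
      also have "\<dots> = (LINT y:SS|lborel. of_real (exp (2*(y$1))) * G (exp (ci y)))"
        by (rule set_borel_integral_eq_integral(2)[symmetric, OF A])
      also have "\<dots> = (LINT p:D|lborel. H p)"
        unfolding i1 tE(2) ei_vimage[unfolded D'_def[symmetric]] HeiSS ..
      finally show ?thesis by (simp add: \<Omega>_def D_def H_def)
    next
      case False
      then have "\<not> set_integrable lborel D H" using intiff by simp
      then show ?thesis using False
        by (simp add: \<Omega>_def D_def H_def set_lebesgue_integral_def set_integrable_def not_integrable_integral_eq)
    qed
  next
    case False
    then have nL: "\<not> set_integrable lborel \<Omega> G"
      unfolding set_integrable_def using borel_measurable_integrable measurable_lborel2 by blast
    have nR: "\<not> set_integrable lborel D H"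
    proof
      assume "set_integrable lborel D H"
      then have HDm[measurable]: "(\<lambda>p. indicator D p *\<^sub>R H p) \<in> borel_measurable borel"
        unfolding set_integrable_def using borel_measurable_integrable measurable_lborel2 by blast
      define L where "L x = (ln (cmod x), Arg2pi x)" for x
      have Lm[measurable]: "L \<in> borel_measurable borel"
        unfolding L_def by measurable
      have eq: "(\<lambda>x. indicator \<Omega> x *\<^sub>R G x) =
          (\<lambda>x. indicator \<Omega> x *\<^sub>R (of_real (inverse ((cmod x)\<^sup>2)) * (indicator D (L x) *\<^sub>R H (L x))))"
      proof (rule ext)
        fix x
        show "indicator \<Omega> x *\<^sub>R G x =
          indicator \<Omega> x *\<^sub>R (of_real (inverse ((cmod x)\<^sup>2)) * (indicator D (L x) *\<^sub>R H (L x)))"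
        proof (cases "x \<in> \<Omega>")
          case True
          then have x1: "1 < cmod x" by (simp add: \<Omega>_def)
          then have x0: "0 < cmod x" by linarith
          have LD: "L x \<in> D" using x1 Arg2pi[of x] ln_gt_zero[of "cmod x"] by (auto simp: L_def D_def)
          have TTx: "TT (ln (cmod x)) (Arg2pi x) = x"
          proof -
            have "TT (ln (cmod x)) (Arg2pi x) = of_real (cmod x) * exp (\<i> * of_real (Arg2pi x))"
              using x0 by (simp add: TT_def rcis_def cis_conv_exp)
            also have "\<dots> = x" using Arg2pi[of x] by (simp add: is_Arg_def)
            finally show ?thesis .
          qed
          have ex: "exp (2 * ln (cmod x)) = (cmod x)\<^sup>2"
            using x0 by (simp add: exp_of_nat_mult[symmetric] ln_powr[symmetric] powr_def[symmetric])
          have "H (L x) = of_real ((cmod x)\<^sup>2) * G x"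
            by (simp add: H_def L_def TTx ex)
          then show ?thesis using True LD x0 by (simp add: field_simps)
        qed simp
      qed
      have "(\<lambda>x. indicator \<Omega> x *\<^sub>R G x) \<in> borel_measurable borel"
        unfolding eq by measurable
      with False show False by simp
    qed
    show ?thesis using nL nR
      by (simp add: \<Omega>_def D_def H_def set_lebesgue_integral_def set_integrable_def not_integrable_integral_eq)
  qed
qed


lemma smooth_of: assumes "C0_infty_ext u" shows "smooth2 u"
proof -
  have "C_k (Suc (Suc 0)) u" using assms by (simp add: C0_infty_ext_def C_infty_def)
  then show ?thesis by unfold_locales simp_all
qed

lemma main1:
  fixes u :: "complex \<Rightarrow> complex" and V :: "complex \<Rightarrow> real"
  assumes "smooth2 u"
  shows "(LINT x:{x. cmod x > 1}|lborel. cnj (u x) * (- laplacian u x + of_real (V x) * u x))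
         = (LINT p:{0<..} \<times> {0..2*pi}|lborel. (case p of (r, \<phi>) \<Rightarrow>
              cnj (psi u r \<phi>) *
                ( - (1 / of_real r) * pdr (\<lambda>s t. of_real s * pdr (psi u) s t) r \<phi>
                  - pdphi (pdphi (psi u)) r \<phi>
                  + of_real (1 / (4 * r\<^sup>2)) * psi u r \<phi>
                  + of_real (exp (2 * r) * V (rcis (exp r) \<phi>)) * psi u r \<phi>) * of_real r))"
proof -
  interpret smooth2 u by fact
  have "({0<..} :: real set) \<times> {0..2*pi} \<in> sets (borel \<Otimes>\<^sub>M (borel :: real measure))" by (rule pair_measureI) (simp_all add: borel_open borel_closed)
  then have Dm: "{0<..} \<times> {0..2*pi} \<in> sets (lborel :: (real \<times> real) measure)" by (metis borel_prod sets_lborel)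
  show ?thesis
    unfolding polar_int
  proof (rule set_lebesgue_integral_cong[OF Dm], intro allI impI)
    fix p :: "real \<times> real" assume "p \<in> {0<..} \<times> {0..2*pi}"
    then obtain r \<phi> where p: "p = (r, \<phi>)" and r: "0 < r" by auto
    show "of_real (exp (2 * fst p)) * (cnj (u (TT (fst p) (snd p))) * (- laplacian u (TT (fst p) (snd p)) + of_real (V (TT (fst p) (snd p))) * u (TT (fst p) (snd p))))
      = (case p of (r, \<phi>) \<Rightarrow>
              cnj (psi u r \<phi>) *
                ( - (1 / of_real r) * pdr (\<lambda>s t. of_real s * pdr (psi u) s t) r \<phi>
                  - pdphi (pdphi (psi u)) r \<phi>
                  + of_real (1 / (4 * r\<^sup>2)) * psi u r \<phi>
                  + of_real (exp (2 * r) * V (rcis (exp r) \<phi>)) * psi u r \<phi>) * of_real r)"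
      unfolding p fst_conv snd_conv prod.case by (rule pointwise[OF r, symmetric])
  qed
qed

theorem proposition3p3:
  fixes u :: "complex \<Rightarrow> complex" and V W :: "complex \<Rightarrow> real"
  assumes "C0_infty_ext u"
  shows "((LINT x:{x. cmod x > 1}|lborel. cnj (u x) * (- laplacian u x + of_real (V x) * u x))
         = (LINT p:{0<..} \<times> {0..2*pi}|lborel. (case p of (r, \<phi>) \<Rightarrow>
              cnj (psi u r \<phi>) *
                ( - (1 / of_real r) * pdr (\<lambda>s t. of_real s * pdr (psi u) s t) r \<phi>
                  - pdphi (pdphi (psi u)) r \<phi>
                  + of_real (1 / (4 * r\<^sup>2)) * psi u r \<phi>
                  + of_real (exp (2 * r) * V (rcis (exp r) \<phi>)) * psi u r \<phi>) * of_real r))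
      \<and> (LINT x:{x. cmod x > 1}|lborel. cnj (u x) *
              (- laplacian u x
               + of_real (- 1 / (4 * (cmod x)\<^sup>2 * (ln (cmod x))\<^sup>2) + W x) * u x))
         = (LINT p:{0<..} \<times> {0..2*pi}|lborel. (case p of (r, \<phi>) \<Rightarrow>
              cnj (psi u r \<phi>) *
                ( - (1 / of_real r) * pdr (\<lambda>s t. of_real s * pdr (psi u) s t) r \<phi>
                  - pdphi (pdphi (psi u)) r \<phi>
                  + of_real (exp (2 * r) * W (rcis (exp r) \<phi>)) * psi u r \<phi>) * of_real r)))"
proof
  have sm: "smooth2 u" by (rule smooth_of[OF assms])
  show "(LINT x:{x. cmod x > 1}|lborel. cnj (u x) * (- laplacian u x + of_real (V x) * u x))
         = (LINT p:{0<..} \<times> {0..2*pi}|lborel. (case p of (r, \<phi>) \<Rightarrow>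
              cnj (psi u r \<phi>) *
                ( - (1 / of_real r) * pdr (\<lambda>s t. of_real s * pdr (psi u) s t) r \<phi>
                  - pdphi (pdphi (psi u)) r \<phi>
                  + of_real (1 / (4 * r\<^sup>2)) * psi u r \<phi>
                  + of_real (exp (2 * r) * V (rcis (exp r) \<phi>)) * psi u r \<phi>) * of_real r))"
    by (rule main1[OF sm])
  define V' where "V' x = - 1 / (4 * (cmod x)\<^sup>2 * (ln (cmod x))\<^sup>2) + W x" for x
  have "({0<..} :: real set) \<times> {0..2*pi} \<in> sets (borel \<Otimes>\<^sub>M (borel :: real measure))"
    by (rule pair_measureI) (simp_all add: borel_open borel_closed)
  then have Dm: "{0<..} \<times> {0..2*pi} \<in> sets (lborel :: (real \<times> real) measure)" by (metis borel_prod sets_lborel)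
  show "(LINT x:{x. cmod x > 1}|lborel. cnj (u x) *
              (- laplacian u x
               + of_real (- 1 / (4 * (cmod x)\<^sup>2 * (ln (cmod x))\<^sup>2) + W x) * u x))
         = (LINT p:{0<..} \<times> {0..2*pi}|lborel. (case p of (r, \<phi>) \<Rightarrow>
              cnj (psi u r \<phi>) *
                ( - (1 / of_real r) * pdr (\<lambda>s t. of_real s * pdr (psi u) s t) r \<phi>
                  - pdphi (pdphi (psi u)) r \<phi>
                  + of_real (exp (2 * r) * W (rcis (exp r) \<phi>)) * psi u r \<phi>) * of_real r))"
    unfolding V'_def[symmetric] main1[OF sm, of V']
  proof (rule set_lebesgue_integral_cong[OF Dm], intro allI impI)
    fix p :: "real \<times> real" assume "p \<in> {0<..} \<times> {0..2*pi}"
    then obtain r \<phi> where p: "p = (r, \<phi>)" and r: "0 < r" by auto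
    have e2: "exp (2 * r) = (exp r)\<^sup>2" by (simp add: power2_eq_square flip: exp_add mult_2)
    have key: "(of_real (1 / (4 * r\<^sup>2)) :: complex) + of_real (exp (2 * r) * V' (rcis (exp r) \<phi>))
        = of_real (exp (2 * r) * W (rcis (exp r) \<phi>))"
    proof -
      have v: "V' (rcis (exp r) \<phi>) = - 1 / (4 * (exp r)\<^sup>2 * r\<^sup>2) + W (rcis (exp r) \<phi>)"
        by (simp add: V'_def)
      have gen: "1 / (4 * r\<^sup>2) + E * (- 1 / (4 * E * r\<^sup>2) + w) = E * w" if "E > 0" for E w :: real
        using that r by (simp add: field_simps)
      have "1 / (4 * r\<^sup>2) + exp (2 * r) * V' (rcis (exp r) \<phi>) = exp (2 * r) * W (rcis (exp r) \<phi>)"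
        unfolding v e2 by (rule gen) simp
      then show ?thesis by (metis of_real_add)
    qed
    show "(case p of (r, \<phi>) \<Rightarrow>
              cnj (psi u r \<phi>) *
                ( - (1 / of_real r) * pdr (\<lambda>s t. of_real s * pdr (psi u) s t) r \<phi>
                  - pdphi (pdphi (psi u)) r \<phi>
                  + of_real (1 / (4 * r\<^sup>2)) * psi u r \<phi>
                  + of_real (exp (2 * r) * V' (rcis (exp r) \<phi>)) * psi u r \<phi>) * of_real r)
        = (case p of (r, \<phi>) \<Rightarrow>
              cnj (psi u r \<phi>) *
                ( - (1 / of_real r) * pdr (\<lambda>s t. of_real s * pdr (psi u) s t) r \<phi>
                  - pdphi (pdphi (psi u)) r \<phi>
                  + of_real (exp (2 * r) * W (rcis (exp r) \<phi>)) * psi u r \<phi>) * of_real r)"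
      unfolding p prod.case key[symmetric] by (simp only: distrib_right add.assoc)
  qed
qed


end
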